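(* Let $k_2,h,\alpha,l,L,k>0$ with $L>l$. Then the equation $$-\frac{k_2}{h}\,x=\frac{\tan(\alpha l x)+k\alpha\tan((L-l)x)}{k\alpha-\tan(\alpha l x)\tan((L-l)x)},\qquad x>0,$$ has infinitely many positive solutions $0<x_1<x_2<\cdots<x_n<\cdots$.
   Context: This is the eigenvalue equation arising from separation of variables for heat conduction in a two-material bar $[0,L]$ with interface at $x=l$, Dirichlet condition at $x=0$ and convective (Robin) condition with coefficient $h$ at $x=L$; here $k=k_1/k_2$ is the ratio of the thermal conductivities and $\alpha=\alpha_2/\alpha_1$ the ratio of the square roots of the thermal diffusivities of the two materials. Solutions are understood as points $x>0$ where the right-hand side is defined and equals the left-hand side. *)

theory Defs
  imports "HOL-Analysis.Analysis"
begin

definition eig_rhs :: "real \<Rightarrow> real \<Rightarrow> real \<Rightarrow> real \<Rightarrow> real \<Rightarrow> real" where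
  "eig_rhs \<alpha> l L k x =
     (tan (\<alpha> * l * x) + k * \<alpha> * tan ((L - l) * x)) /
     (k * \<alpha> - tan (\<alpha> * l * x) * tan ((L - l) * x))"

definition is_eig_solution :: "real \<Rightarrow> real \<Rightarrow> real \<Rightarrow> real \<Rightarrow> real \<Rightarrow> real \<Rightarrow> real \<Rightarrow> bool" where
  "is_eig_solution k2 h \<alpha> l L k x \<longleftrightarrow>
     x > 0 \<and> cos (\<alpha> * l * x) \<noteq> 0 \<and> cos ((L - l) * x) \<noteq> 0 \<and>
     k * \<alpha> - tan (\<alpha> * l * x) * tan ((L - l) * x) \<noteq> 0 \<and>
     - (k2 / h) * x = eig_rhs \<alpha> l L k x"

end

theory Submission
  imports Defs
begin

lemma per2:
  fixes y :: real
  shows "sin (y + 2 * real j * pi) = sin y" "cos (y + 2 * real j * pi) = cos y"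
  by (simp_all add: sin_add cos_add sin_2npi cos_2npi)

lemma arctan_ge: assumes "(0::real) < y" shows "arctan y \<ge> pi/2 - 1/y"
proof -
  have "arctan (inverse y) \<le> inverse y" using assms by (intro arctan_le_self) simp
  with arctan_inverse[OF assms] show ?thesis by (simp add: field_simps)
qed

lemma root_from_Psi:
  fixes a x M R :: real and m :: int
  assumes "R \<noteq> 0" "a * x - arctan (M / R) = of_int m * pi"
  shows "cos (a*x) * M - sin (a*x) * R = 0 \<and> cos (a*x) \<noteq> 0"
proof -
  define T where "T = arctan (M/R)"
  have ax: "a*x = of_int m * pi + T" using assms(2) T_def by simp
  have s0: "sin (of_int m * pi) = 0" by (simp add: sin_times_pi_eq_0)
  have c1: "cos (of_int m * pi) \<noteq> 0" using s0 sin_cos_squared_add[of "of_int m * pi"] by auto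
  have cT: "cos T \<noteq> 0" unfolding T_def by (rule cos_arctan_not_zero)
  have tT: "sin T = cos T * (M/R)" unfolding T_def
    by (simp add: sin_arctan cos_arctan)
  have "cos (a*x) = cos (of_int m * pi) * cos T" "sin (a*x) = cos (of_int m * pi) * sin T"
    using s0 by (simp_all add: ax cos_add sin_add)
  then show ?thesis using c1 cT tT assms(1) by (simp add: field_simps)
qed

lemma main_lemma:
  fixes a b p1 p2 q1 q2 X :: real
  assumes ab: "b < a" and b0: "0 < b" and p1: "0<p1" and p2: "0<p2" and q1: "0<q1" and q2: "0<q2"
  shows "\<exists>x>X. cos (a*x) * (p1*x* cos (b*x) + p2* sin (b*x)) - sin (a*x) * (q1*x* sin (b*x) - q2* cos (b*x)) = 0
             \<and> cos (a*x) \<noteq> 0 \<and> cos (b*x) \<noteq> 0"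
proof -
  define r where "r = a/b"
  have r1: "r > 1" using ab b0 by (simp add: r_def field_simps)
  define C where "C = r + 2*q1/p1"
  have C0: "C > 0"
  proof -
    have "2*q1/p1 > 0" using p1 q1 by simp
    then show ?thesis using r1 by (simp add: C_def)
  qed
  define \<delta> where "\<delta> = min (pi/3) ((r-1)*pi/(2*C))"
  have d0: "\<delta> > 0" using r1 C0 by (simp add: \<delta>_def pi_gt_zero)
  have d3: "\<delta> \<le> pi/3" by (simp add: \<delta>_def)
  have dpi: "\<delta> < pi" using d3 pi_gt_zero by linarith
  have dC: "\<delta> * C \<le> (r-1)*pi/2" using C0 by (simp add: \<delta>_def min_def field_simps split: if_splits)
  define \<eta> where "\<eta> = (r-1)*pi - \<delta>*C"
  have eta0: "\<eta> > 0" using dC r1 by (simp add: \<eta>_def) (smt (verit) mult_pos_pos pi_gt_zero)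
  have sd0: "sin \<delta> > 0" using d0 d3 by (intro sin_gt_zero) (auto simp: pi_gt_zero)
  have sdd: "sin \<delta> \<le> \<delta>" using d0 by (intro sin_x_le_x) simp
  have cd: "cos \<delta> \<ge> 1/2"
  proof -
    have "cos (pi/3) \<le> cos \<delta>" using d0 d3 by (intro cos_monotone_0_pi_le) auto
    then show ?thesis by (simp add: cos_60)
  qed
  define B where "B = max (max X 1) (max (q2/(q1 * sin \<delta>)) (q2/(p1*\<eta>))) + 1"
  obtain j :: nat where j: "B*b/(2*pi) < real j" using reals_Archimedean2 by blast
  have jB: "2*real j*pi/b > B" using j b0 pi_gt_zero by (simp add: field_simps)
  define xs where "xs = (2*real j*pi + \<delta>)/b"
  define xe where "xe = (2*real j*pi + pi)/b"
  have xsB: "xs > B" using jB d0 b0 unfolding xs_def by (simp add: field_simps)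
  have xsxe: "xs < xe" using dpi b0 unfolding xs_def xe_def by (intro divide_strict_right_mono) auto
  have B1: "B > X" "B > q2/(q1 * sin \<delta>)" "B > q2/(p1*\<eta>)" "B > 1" by (simp_all add: B_def)
  define M where "M = (\<lambda>x::real. p1*x* cos (b*x) + p2* sin (b*x))"
  define R where "R = (\<lambda>x::real. q1*x* sin (b*x) - q2* cos (b*x))"
  have yrep: "b*x = (b*x - 2*real j*pi) + 2*real j*pi" for x by simp
  have Rpos: "R x > 0" if "xs \<le> x" "x \<le> xe" for x
  proof -
    define y where "y = b*x - 2*real j*pi"
    have sy: "sin (b*x) = sin y" and cy: "cos (b*x) = cos y"
      using per2[of y j] by (simp_all add: y_def)
    have y1: "\<delta> \<le> y" using that b0 unfolding xs_def y_def by (simp add: field_simps)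
    have y2: "y \<le> pi" using that b0 unfolding xe_def y_def by (simp add: field_simps)
    have xpos: "x > q2/(q1 * sin \<delta>)" using that xsB B1 by linarith
    show ?thesis
    proof (cases "y \<le> pi/2")
      case True
      have "sin \<delta> \<le> sin y" using y1 True d0 by (intro sin_monotone_2pi_le) auto
      moreover have "q1 * x * sin \<delta> > q2" using xpos sd0 q1 by (simp add: field_simps)
      moreover have "cos y \<le> 1" by simp
      moreover have "x > 0" using xpos sd0 q1 q2 by (smt (verit) divide_pos_pos mult_pos_pos)
      ultimately have "q1*x* sin y \<ge> q1*x* sin \<delta>" "q2 * cos y \<le> q2" using q1 q2
        by (simp_all add: mult_left_mono)
      then show ?thesis unfolding R_def sy cy using \<open>q1 * x * sin \<delta> > q2\<close> by linarith
    next
      case False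
      then show ?thesis
      proof (cases "y = pi")
        case True
        then show ?thesis unfolding R_def sy cy using q2 by simp
      next
        case False
        have "cos y < 0" using \<open>\<not> y \<le> pi/2\<close> y2 by (intro cos_lt_zero_pi) auto
        moreover have "sin y \<ge> 0" using y1 y2 d0 by (intro sin_ge_zero) auto
        moreover have "x > 0" using xpos sd0 q1 q2 by (smt (verit) divide_pos_pos mult_pos_pos)
        ultimately show ?thesis unfolding R_def sy cy using q1 q2
          by (smt (verit) mult_pos_pos mult_nonneg_nonneg mult_pos_neg)
      qed
    qed
  qed
  define Psi where "Psi = (\<lambda>x. a*x - arctan (M x / R x))"
  have cont: "continuous_on {xs..xe} Psi"
    unfolding Psi_def M_def R_def
    by (intro continuous_intros) (use Rpos in \<open>fastforce simp: R_def\<close>)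
  have xs0: "xs > 0" using xsB B1 by linarith
  have bxs: "b*xs = \<delta> + 2*real j*pi" using b0 by (simp add: xs_def)
  have bxe: "b*xe = pi + 2*real j*pi" using b0 by (simp add: xe_def)
  have Ms: "M xs = p1*xs* cos \<delta> + p2* sin \<delta>" unfolding M_def bxs per2 ..
  have Rs: "R xs = q1*xs* sin \<delta> - q2* cos \<delta>" unfolding R_def bxs per2 ..
  have Me: "M xe = - p1*xe" unfolding M_def bxe per2 by simp
  have Re: "R xe = q2" unfolding R_def bxe per2 by simp
  have Rs0: "R xs > 0" using Rpos xsxe by simp
  have Ms1: "M xs \<ge> p1*xs/2"
  proof -
    have "p1*xs*(1/2) \<le> p1*xs* cos \<delta>" using cd p1 xs0 by (intro mult_left_mono) auto
    moreover have "p2 * sin \<delta> \<ge> 0" using p2 sd0 by simp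
    ultimately show ?thesis unfolding Ms by simp
  qed
  have Rs1: "R xs \<le> q1*xs*\<delta>"
  proof -
    have "q1*xs* sin \<delta> \<le> q1*xs*\<delta>" using sdd q1 xs0 by (intro mult_left_mono) auto
    moreover have "q2 * cos \<delta> \<ge> 0" using q2 cd by simp
    ultimately show ?thesis unfolding Rs by simp
  qed
  have "p1*xs > 0" using p1 xs0 by simp
  then have Mpos: "M xs \<ge> 0" using Ms1 by linarith
  have "M xs / R xs \<ge> (p1*xs/2) / (q1*xs*\<delta>)"
    using Ms1 Rs1 Rs0 p1 xs0 Mpos by (intro frac_le) auto
  also have "(p1*xs/2) / (q1*xs*\<delta>) = p1/(2*q1*\<delta>)" using xs0 by (simp add: field_simps)
  finally have MRs: "M xs / R xs \<ge> p1/(2*q1*\<delta>)" .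
  have "arctan (M xs / R xs) \<ge> arctan (p1/(2*q1*\<delta>))" using MRs by (simp add: arctan_le_iff)
  moreover have "arctan (p1/(2*q1*\<delta>)) \<ge> pi/2 - 2*q1*\<delta>/p1" using arctan_ge[of "p1/(2*q1*\<delta>)"] p1 q1 d0 by simp
  ultimately have Ths: "arctan (M xs / R xs) \<ge> pi/2 - 2*q1*\<delta>/p1" by linarith
  have xe0: "xe > 0" using xs0 xsxe by linarith
  have "arctan (p1*xe/q2) \<ge> pi/2 - q2/(p1*xe)" using arctan_ge[of "p1*xe/q2"] p1 q2 xe0 by simp
  then have The: "arctan (M xe / R xe) \<le> -(pi/2) + q2/(p1*xe)" unfolding Me Re
    by (simp add: arctan_minus)
  have small: "q2/(p1*xe) < \<eta>"
  proof -
    have "xe > q2/(p1*\<eta>)" using xsB B1 xsxe by linarith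
    then show ?thesis using p1 eta0 q2 xe0 by (simp add: field_simps)
  qed
  have "a*(xe - xs) = r*(pi - \<delta>)" using b0 unfolding r_def xe_def xs_def by (simp add: field_simps)
  moreover have "Psi xe - Psi xs = a*(xe-xs) - arctan (M xe / R xe) + arctan (M xs / R xs)"
    by (simp add: Psi_def algebra_simps)
  moreover have "\<eta> = r*pi - pi - r*\<delta> - 2*q1*\<delta>/p1"
    unfolding \<eta>_def C_def by (simp add: algebra_simps)
  moreover have "r*(pi - \<delta>) = r*pi - r*\<delta>" by (simp add: algebra_simps)
  ultimately have gap: "Psi xe - Psi xs > 2*pi" using Ths The small by linarith
  define n where "n = \<lfloor>Psi xs / pi\<rfloor> + 1"
  have n1: "of_int n * pi > Psi xs"
  proof -
    have "Psi xs / pi < of_int n" unfolding n_def by linarith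
    then show ?thesis using pi_gt_zero by (simp add: field_simps)
  qed
  have n2: "of_int n * pi \<le> Psi xs + pi"
  proof -
    have "of_int n \<le> Psi xs / pi + 1" unfolding n_def by linarith
    then show ?thesis using pi_gt_zero by (simp add: field_simps)
  qed
  have good: "\<exists>x. xs \<le> x \<and> x \<le> xe \<and> Psi x = of_int m * pi" if "m = n \<or> m = n + 1" for m
  proof -
    have "Psi xs \<le> of_int m * pi" "of_int m * pi \<le> Psi xe" using that n1 n2 gap by (auto simp: algebra_simps)
    then show ?thesis using IVT'[of Psi xs "of_int m * pi" xe] cont xsxe by auto
  qed
  obtain x1 where x1: "xs \<le> x1" "x1 \<le> xe" "Psi x1 = of_int n * pi" using good by blast
  obtain x2 where x2: "xs \<le> x2" "x2 \<le> xe" "Psi x2 = of_int (n+1) * pi" using good by blast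
  have x12: "x1 \<noteq> x2" using x1(3) x2(3) pi_gt_zero by (auto simp: algebra_simps)
  have rootprop: "cos (a*x) * (p1*x* cos (b*x) + p2* sin (b*x)) - sin (a*x) * (q1*x* sin (b*x) - q2* cos (b*x)) = 0
             \<and> cos (a*x) \<noteq> 0 \<and> x > X" if "xs \<le> x" "x \<le> xe" "Psi x = of_int m * pi" for x m
  proof -
    have "R x \<noteq> 0" using Rpos that by force
    from root_from_Psi[OF this, of a x "M x" m] that(3)
    show ?thesis using that xsB B1 unfolding Psi_def M_def R_def by auto
  qed
  have bz: "x = (2*real j*pi + pi/2)/b" if "xs \<le> x" "x \<le> xe" "cos (b*x) = 0" for x
  proof -
    define y where "y = b*x - 2*real j*pi"
    have cy: "cos y = 0" using per2[of y j] that(3) by (simp add: y_def)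
    have y1: "0 \<le> y" using that d0 b0 unfolding xs_def y_def by (simp add: field_simps)
    have y2: "y \<le> pi" using that b0 unfolding xe_def y_def by (simp add: field_simps)
    have "y = pi/2" using cos_inj_pi[of y "pi/2"] cy y1 y2 by simp
    then show ?thesis using b0 unfolding y_def by (simp add: field_simps)
  qed
  show ?thesis
  proof (cases "cos (b*x1) = 0")
    case True
    then have "cos (b*x2) \<noteq> 0" using bz x1 x2 x12 by metis
    then show ?thesis using rootprop[OF x2] by blast
  next
    case False
    then show ?thesis using rootprop[OF x1] by blast
  qed
qed

lemma seq_from_unbounded:
  fixes P :: "real \<Rightarrow> bool"
  assumes "\<And>X. \<exists>x>X. P x"
  shows "\<exists>f :: nat \<Rightarrow> real. strict_mono f \<and> (\<forall>n. P (f n))"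
proof -
  define f where "f = rec_nat (SOME x. P x) (\<lambda>_ y. SOME x. x > y \<and> P x)"
  have f0: "f 0 = (SOME x. P x)" and fS: "f (Suc n) = (SOME x. x > f n \<and> P x)" for n
    by (simp_all add: f_def)
  have P0: "P (f 0)" unfolding f0 using assms[of 0] by (metis someI_ex)
  have PS: "f (Suc n) > f n \<and> P (f (Suc n))" for n
    unfolding fS using assms[of "f n"] by (rule someI_ex)
  have "P (f n)" for n by (cases n) (use P0 PS in auto)
  moreover have "strict_mono f" using PS by (intro strict_monoI_Suc) auto
  ultimately show ?thesis by blast
qed

lemma sol_of_F:
  fixes k2 h \<alpha> l L k x :: real
  assumes "h > 0" "\<alpha> > 0" "k > 0" "x > 0"
    and F: "sin (\<alpha>*l*x) * cos ((L-l)*x) + k*\<alpha> * cos (\<alpha>*l*x) * sin ((L-l)*x)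
        + (k2/h) * x * (k*\<alpha> * cos (\<alpha>*l*x) * cos ((L-l)*x) - sin (\<alpha>*l*x) * sin ((L-l)*x)) = 0"
    and ca: "cos (\<alpha>*l*x) \<noteq> 0" and cb: "cos ((L-l)*x) \<noteq> 0"
  shows "is_eig_solution k2 h \<alpha> l L k x"
proof -
  define sa where "sa = sin (\<alpha>*l*x)"
  define ca' where "ca' = cos (\<alpha>*l*x)"
  define sb where "sb = sin ((L-l)*x)"
  define cb' where "cb' = cos ((L-l)*x)"
  define K where "K = k*\<alpha>"
  define c where "c = k2/h"
  define N where "N = sa*cb' + K*ca'* sb"
  define D where "D = K*ca'*cb' - sa* sb"
  have K0: "K > 0" using assms by (simp add: K_def)
  have FN: "N + c*x*D = 0" using F by (simp add: N_def D_def sa_def ca'_def sb_def cb'_def K_def c_def)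
  have ident: "N^2 + D^2 = (K^2*ca'^2 + sa^2)*(cb'^2 + sb^2)"
    by (simp add: N_def D_def power2_eq_square algebra_simps)
  have e1: "cb'^2 + sb^2 = 1" by (simp add: cb'_def sb_def)
  have e2: "K^2*ca'^2 > 0" using K0 ca by (simp add: ca'_def)
  have e3: "sa^2 \<ge> 0" by simp
  have "N^2 + D^2 > 0" unfolding ident e1 mult_1_right using e2 e3 by linarith
  have D0: "D \<noteq> 0"
  proof
    assume "D = 0"
    then have "N = 0" using FN by simp
    with \<open>D = 0\<close> \<open>N^2 + D^2 > 0\<close> show False by simp
  qed
  have ca0: "ca' \<noteq> 0" and cb0: "cb' \<noteq> 0" using ca cb by (simp_all add: ca'_def cb'_def)
  have den: "k * \<alpha> - tan (\<alpha> * l * x) * tan ((L - l) * x) = D / (ca'*cb')"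
    using ca0 cb0 by (simp add: tan_def D_def K_def sa_def ca'_def sb_def cb'_def field_simps)
  have num: "tan (\<alpha> * l * x) + k * \<alpha> * tan ((L - l) * x) = N / (ca'*cb')"
    using ca0 cb0 by (simp add: tan_def N_def K_def sa_def ca'_def sb_def cb'_def field_simps)
  have "eig_rhs \<alpha> l L k x = N / D" unfolding eig_rhs_def num den using ca0 cb0 by simp
  also have "N / D = - c * x" using FN D0 by (simp add: field_simps)
  finally have "eig_rhs \<alpha> l L k x = -(k2/h) * x" by (simp add: c_def)
  then show ?thesis unfolding is_eig_solution_def using assms ca cb den D0 ca0 cb0 by simp
qed

theorem theorem1:
  fixes k2 h \<alpha> l L k :: real
  assumes "k2 > 0" "h > 0" "\<alpha> > 0" "l > 0" "L > 0" "k > 0" "L > l"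
  shows "\<exists>x :: nat \<Rightarrow> real. strict_mono x \<and> (\<forall>n. is_eig_solution k2 h \<alpha> l L k (x n))"
proof (rule seq_from_unbounded)
  fix X :: real
  define A where "A = \<alpha>*l"
  define Bb where "Bb = L - l"
  define K where "K = k*\<alpha>"
  define c where "c = k2/h"
  have A0: "A > 0" and B0: "Bb > 0" and K0: "K > 0" and c0: "c > 0"
    using assms by (simp_all add: A_def Bb_def K_def c_def)
  define F where "F = (\<lambda>x. sin (A*x) * cos (Bb*x) + K * cos (A*x) * sin (Bb*x)
        + c * x * (K * cos (A*x) * cos (Bb*x) - sin (A*x) * sin (Bb*x)))"
  have suff: "\<exists>x>X. is_eig_solution k2 h \<alpha> l L k x"
    if "x > X" "x > 0" "F x = 0" "cos (A*x) \<noteq> 0" "cos (Bb*x) \<noteq> 0" for x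
  proof -
    have "is_eig_solution k2 h \<alpha> l L k x"
      by (rule sol_of_F) (use that assms in \<open>auto simp: F_def A_def Bb_def K_def c_def mult.assoc\<close>)
    then show ?thesis using that by blast
  qed
  consider "Bb < A" | "A < Bb" | "A = Bb" by linarith
  then show "\<exists>x>X. is_eig_solution k2 h \<alpha> l L k x"
  proof cases
    case 1
    obtain x where "x > max X 0" and x:
      "cos (A*x) * (K*c*x * cos (Bb*x) + K * sin (Bb*x)) - sin (A*x) * (c*x * sin (Bb*x) - 1 * cos (Bb*x)) = 0"
      "cos (A*x) \<noteq> 0" "cos (Bb*x) \<noteq> 0"
      using main_lemma[OF 1 B0 mult_pos_pos[OF K0 c0] K0 c0, of 1 "max X 0"] by auto
    moreover have "F x = 0" using x(1) unfolding F_def by (simp add: algebra_simps)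
    ultimately show ?thesis by (intro suff[of x]) auto
  next
    case 2
    obtain x where "x > max X 0" and x:
      "cos (Bb*x) * (K*c*x * cos (A*x) + 1 * sin (A*x)) - sin (Bb*x) * (c*x * sin (A*x) - K * cos (A*x)) = 0"
      "cos (Bb*x) \<noteq> 0" "cos (A*x) \<noteq> 0"
      using main_lemma[OF 2 A0 mult_pos_pos[OF K0 c0] _ c0 K0, of 1 "max X 0"] by auto
    moreover have "F x = 0" using x(1) unfolding F_def by (simp add: algebra_simps)
    ultimately show ?thesis by (intro suff[of x]) auto
  next
    case 3
    obtain n :: nat where n: "max X 0 * A / pi < real n" using reals_Archimedean2 by blast
    define x0 where "x0 = real n * pi / A"
    define x1 where "x1 = (real n * pi + pi/2) / A"
    have "max X 0 * A < real n * pi" using n pi_gt_zero by (simp add: pos_divide_less_eq)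
    then have x0X: "x0 > max X 0" using A0 unfolding x0_def by (subst pos_less_divide_eq) auto
    have x01: "x0 \<le> x1" using A0 pi_gt_zero by (simp add: x0_def x1_def divide_right_mono)
    have s0: "sin (A*x0) = 0" using A0 by (simp add: x0_def sin_npi)
    then have c0sq: "cos (A*x0)^2 = 1" using sin_cos_squared_add[of "A*x0"] by simp
    have cz: "cos (A*x1) = 0" using A0 by (simp add: x1_def cos_add sin_npi)
    then have s1sq: "sin (A*x1)^2 = 1" using sin_cos_squared_add[of "A*x1"] by simp
    have Fx0: "F x0 = c*x0*K" unfolding F_def 3[symmetric] using s0 c0sq
      by (simp add: power2_eq_square algebra_simps)
    have Fx1: "F x1 = - c*x1" unfolding F_def 3[symmetric] using cz s1sq
      by (simp add: power2_eq_square algebra_simps)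
    have x0p: "x0 > 0" using x0X by simp
    have "F x1 \<le> 0" "0 \<le> F x0" using Fx0 Fx1 x0p x01 c0 K0 by simp_all
    moreover have "continuous_on {x0..x1} F" unfolding F_def by (intro continuous_intros)
    ultimately obtain x where x: "x0 \<le> x" "x \<le> x1" "F x = 0"
      using IVT2'[of F x1 0 x0] x01 by auto
    have xp: "x > 0" using x x0p by simp
    have cax: "cos (A*x) \<noteq> 0"
    proof
      assume h0: "cos (A*x) = 0"
      then have "sin (A*x)^2 = 1" using sin_cos_squared_add[of "A*x"] by simp
      then have "F x = - c*x" unfolding F_def 3[symmetric] using h0
        by (simp add: power2_eq_square algebra_simps)
      with x(3) xp c0 show False by simp
    qed
    show ?thesis using x x0X xp cax 3 by (intro suff[of x]) auto
  qed
qed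

end
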